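(* Consider the iteration $\hat P_{i+1}=\mathcal H\big(\mathcal Q(\hat P_i)+\Delta Q_i\big)$, $i\in\mathbb Z_+$, with $\hat P_0\in\mathbb S^n_+$ and $\Delta Q_i\in\mathbb S^{n+m}$, and let $\|\Delta Q\|_\infty=\sup_i\|\Delta Q_i\|_2$. For every $\hat P_0\in\mathbb S^n_+$ there exist $d^*>0$, a $\mathcal{KL}$-function $\beta$ and a $\mathcal K$-function $\tilde\gamma$ such that whenever $\|\Delta Q\|_\infty<d^*$ the iteration is well defined and $$\|\hat P_i-P^*\|_2\le\beta(\|\hat P_0-P^*\|_2,i)+\tilde\gamma(\|\Delta Q\|_\infty)\quad\text{for all } i\in\mathbb Z_+.$$
   Context: Let $n,m\ge 1$, $A\in\mathbb R^{n\times n}$, $B\in\mathbb R^{n\times m}$, $S\in\mathbb S^n_{++}$, $R\in\mathbb S^m_{++}$, with $(A,B)$ stabilizable. Here $\mathbb S^n$, $\mathbb S^n_+$, $\mathbb S^n_{++}$ denote the real symmetric, symmetric positive semidefinite, and symmetric positive definite $n\times n$ matrices; $\|\cdot\|_2$ is the spectral norm. For $P\in\mathbb S^n_+$ define the Hamiltonian $\mathcal Q(P)=\begin{pmatrix}A^\top PA+S & A^\top PB\\ B^\top PA & B^\top PB+R\end{pmatrix}\in\mathbb S^{n+m}$. For $Q\in\mathbb R^{(n+m)\times(n+m)}$ partitioned as $Q=\begin{pmatrix}[Q]_{xx} & [Q]_{ux}^\top\\ [Q]_{ux} & [Q]_{uu}\end{pmatrix}$ with $[Q]_{xx}\in\mathbb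 R^{n\times n}$, $[Q]_{uu}\in\mathbb R^{m\times m}$ invertible, define the Schur complement $\mathcal H(Q)=[Q]_{xx}-[Q]_{ux}^\top[Q]_{uu}^{-1}[Q]_{ux}$. $P^*\in\mathbb S^n_{++}$ denotes the unique positive definite solution of $P=\mathcal H(\mathcal Q(P))$ (the discrete algebraic Riccati equation). Class $\mathcal K$: continuous, strictly increasing functions $\mathbb R_+\to\mathbb R_+$ vanishing at $0$. Class $\mathcal{KL}$: $\beta:\mathbb R_+\times\mathbb Z_+\to\mathbb R_+$ with $\beta(\cdot,i)\in\mathcal K$ for each $i$ and $\beta(r,i)\downarrow0$ as $i\to\infty$ for each $r\ge0$. *)

theory Defs
  imports "HOL-Analysis.Analysis"
begin

text \<open>Matrices are real^'c^'r (r rows, c columns). The (n+m)x(n+m) matrices are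
indexed by the sum type 'n + 'm: Inl indices form the x-block, Inr indices the u-block.\<close>

definition sym_mat :: "real^'n^'n \<Rightarrow> bool" where
  "sym_mat M \<longleftrightarrow> transpose M = M"

definition psd_mat :: "real^'n^'n \<Rightarrow> bool" where
  "psd_mat M \<longleftrightarrow> sym_mat M \<and> (\<forall>x. 0 \<le> x \<bullet> (M *v x))"

definition pd_mat :: "real^'n^'n \<Rightarrow> bool" where
  "pd_mat M \<longleftrightarrow> sym_mat M \<and> (\<forall>x. x \<noteq> 0 \<longrightarrow> 0 < x \<bullet> (M *v x))"

definition spec_norm :: "real^'c^'r \<Rightarrow> real" where
  "spec_norm M = onorm (\<lambda>x. M *v x)"

definition cmat :: "real^'c^'r \<Rightarrow> complex^'c^'r" where
  "cmat M = (\<chi> i j. complex_of_real (M $ i $ j))"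

definition is_eigenvalue :: "real^'n^'n \<Rightarrow> complex \<Rightarrow> bool" where
  "is_eigenvalue M z \<longleftrightarrow> (\<exists>v::complex^'n. v \<noteq> 0 \<and> cmat M *v v = z *s v)"

definition schur_stable :: "real^'n^'n \<Rightarrow> bool" where
  "schur_stable M \<longleftrightarrow> (\<forall>z. is_eigenvalue M z \<longrightarrow> cmod z < 1)"

definition stabilizable :: "real^'n^'n \<Rightarrow> real^'m^'n \<Rightarrow> bool" where
  "stabilizable A B \<longleftrightarrow> (\<exists>K::real^'n^'m. schur_stable (A + B ** K))"

definition block_mat ::
  "real^('n::finite)^'n \<Rightarrow> real^'m^'n \<Rightarrow> real^'n^'m \<Rightarrow> real^('m::finite)^'m \<Rightarrow> real^('n+'m)^('n+'m)" where
  "block_mat Mxx Mxu Mux Muu = (\<chi> i j. case i of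
      Inl a \<Rightarrow> (case j of Inl b \<Rightarrow> Mxx $ a $ b | Inr b \<Rightarrow> Mxu $ a $ b)
    | Inr a \<Rightarrow> (case j of Inl b \<Rightarrow> Mux $ a $ b | Inr b \<Rightarrow> Muu $ a $ b))"

definition blk_xx :: "real^('n::finite+'m::finite)^('n+'m) \<Rightarrow> real^'n^'n" where
  "blk_xx Q = (\<chi> a b. Q $ Inl a $ Inl b)"
definition blk_ux :: "real^('n::finite+'m::finite)^('n+'m) \<Rightarrow> real^'n^'m" where
  "blk_ux Q = (\<chi> a b. Q $ Inr a $ Inl b)"
definition blk_uu :: "real^('n::finite+'m::finite)^('n+'m) \<Rightarrow> real^'m^'m" where
  "blk_uu Q = (\<chi> a b. Q $ Inr a $ Inr b)"

definition hamQ :: "real^('n::finite)^'n \<Rightarrow> real^'m^'n \<Rightarrow> real^'n^'n \<Rightarrow> real^('m::finite)^'m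
    \<Rightarrow> real^'n^'n \<Rightarrow> real^('n+'m)^('n+'m)" where
  "hamQ A B S R P = block_mat (transpose A ** P ** A + S) (transpose A ** P ** B)
                              (transpose B ** P ** A) (transpose B ** P ** B + R)"

definition schurH :: "real^('n::finite+'m::finite)^('n+'m) \<Rightarrow> real^'n^'n" where
  "schurH Q = blk_xx Q - transpose (blk_ux Q) ** matrix_inv (blk_uu Q) ** blk_ux Q"

primrec riccati_iter :: "real^('n::finite)^'n \<Rightarrow> real^'m^'n \<Rightarrow> real^'n^'n \<Rightarrow> real^('m::finite)^'m
    \<Rightarrow> real^'n^'n \<Rightarrow> (nat \<Rightarrow> real^('n+'m)^('n+'m)) \<Rightarrow> nat \<Rightarrow> real^'n^'n" where
  "riccati_iter A B S R P0 dQ 0 = P0"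
| "riccati_iter A B S R P0 dQ (Suc i) =
     schurH (hamQ A B S R (riccati_iter A B S R P0 dQ i) + dQ i)"

definition class_K :: "(real \<Rightarrow> real) \<Rightarrow> bool" where
  "class_K f \<longleftrightarrow> continuous_on {0..} f \<and> strict_mono_on {0..} f \<and> f 0 = 0
                 \<and> (\<forall>r\<ge>0. 0 \<le> f r)"

definition class_KL :: "(real \<Rightarrow> nat \<Rightarrow> real) \<Rightarrow> bool" where
  "class_KL \<beta> \<longleftrightarrow> (\<forall>i. class_K (\<lambda>r. \<beta> r i))
     \<and> (\<forall>r\<ge>0. antimono (\<lambda>i. \<beta> r i) \<and> (\<lambda>i. \<beta> r i) \<longlonglongrightarrow> 0)"

end

theory Submission
  imports Defs
begin


definition qf :: "real^'n^'n \<Rightarrow> real^'n \<Rightarrow> real" where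
  "qf M x = x \<bullet> (M *v x)"

definition join :: "real^'n \<Rightarrow> real^'m \<Rightarrow> real^('n+'m)" where
  "join x u = (\<chi> i. case i of Inl a \<Rightarrow> x$a | Inr b \<Rightarrow> u$b)"

definition blk_xu :: "real^('n::finite+'m::finite)^('n+'m) \<Rightarrow> real^'m^'n" where
  "blk_xu Q = (\<chi> a b. Q $ Inl a $ Inr b)"

lemma sum_plus_univ: "(\<Sum>i\<in>(UNIV::('a::finite+'b::finite) set). f i) = (\<Sum>a\<in>UNIV. f (Inl a)) + (\<Sum>b\<in>UNIV. f (Inr b))"
  by (subst UNIV_Plus_UNIV[symmetric], subst sum.Plus) (simp_all add: comp_def)

lemma inner_join: "join x u \<bullet> join y v = x \<bullet> y + u \<bullet> v"
  unfolding join_def inner_vec_def by (simp add: sum_plus_univ)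

lemma norm_join_sq: "(norm (join x u))\<^sup>2 = (norm x)\<^sup>2 + (norm u)\<^sup>2"
  by (simp add: power2_norm_eq_inner inner_join)

lemma mv_join: "M *v join x u = join (blk_xx M *v x + blk_xu M *v u) (blk_ux M *v x + blk_uu M *v u)"
  unfolding join_def blk_xx_def blk_xu_def blk_ux_def blk_uu_def
  by (auto simp: vec_eq_iff matrix_vector_mult_def sum_plus_univ split: sum.splits)

lemma inner_transpose: "x \<bullet> (transpose A *v y) = (A *v x) \<bullet> (y::real^_)"
  by (metis dot_lmul_matrix inner_commute transpose_matrix_vector)

lemma inner_vmul: "x \<bullet> (y v* A) = (A *v x) \<bullet> (y::real^_)"
  by (metis inner_transpose transpose_matrix_vector)

lemma qf_join: "qf M (join x u) = qf (blk_xx M) x + x \<bullet> (blk_xu M *v u) + u \<bullet> (blk_ux M *v x) + qf (blk_uu M) u"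
  unfolding qf_def mv_join inner_join by (simp add: inner_add_right)

lemma sym_entry: "transpose M = M \<Longrightarrow> M$i$j = M$j$i"
  by (metis transpose_def vec_lambda_beta)

lemma blk_xu_sym: "transpose M = M \<Longrightarrow> blk_xu M = transpose (blk_ux M)"
  unfolding blk_xu_def blk_ux_def transpose_def by (simp add: vec_eq_iff sym_entry[of M])

lemma blk_uu_sym: "transpose M = M \<Longrightarrow> transpose (blk_uu M) = blk_uu M"
  unfolding blk_uu_def transpose_def by (simp add: vec_eq_iff)

lemma blk_xx_sym: "transpose M = M \<Longrightarrow> transpose (blk_xx M) = blk_xx M"
  unfolding blk_xx_def transpose_def by (simp add: vec_eq_iff)

lemma qf_join_sym: "transpose M = M \<Longrightarrow> qf M (join x u) = qf (blk_xx M) x + 2 * (u \<bullet> (blk_ux M *v x)) + qf (blk_uu M) u"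
proof -
  assume a: "transpose M = M"
  have "x \<bullet> (blk_xu M *v u) = x \<bullet> (transpose (blk_ux M) *v u)"
    by (simp only: blk_xu_sym[OF a])
  also have "\<dots> = (blk_ux M *v x) \<bullet> u" by (rule inner_transpose)
  also have "\<dots> = u \<bullet> (blk_ux M *v x)" by (rule inner_commute)
  finally have e: "x \<bullet> (blk_xu M *v u) = u \<bullet> (blk_ux M *v x)" .
  show ?thesis unfolding qf_join e by linarith
qed

lemma transpose_add: "transpose (X + Y) = transpose X + transpose (Y::real^_^_)"
  by (simp add: transpose_def vec_eq_iff)
lemma transpose_diff: "transpose (X - Y) = transpose X - transpose (Y::real^_^_)"
  by (simp add: transpose_def vec_eq_iff)

lemma qf_add: "qf (X + Y) x = qf X x + qf Y x"
  by (simp add: qf_def matrix_vector_mult_add_rdistrib inner_add_right)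
lemma qf_diff: "qf (X - Y) x = qf X x - qf Y x"
  by (simp add: qf_def matrix_vector_mult_diff_rdistrib inner_diff_right)

lemma blocks_block_mat:
  "blk_xx (block_mat a b c d) = a" "blk_xu (block_mat a b c d) = b"
  "blk_ux (block_mat a b c d) = c" "blk_uu (block_mat a b c d) = d"
  by (simp_all add: blk_xx_def blk_xu_def blk_ux_def blk_uu_def block_mat_def vec_eq_iff)

lemma qf_hamQ: "qf (hamQ A B S R P) (join x u) = qf P (A *v x + B *v u) + qf S x + qf R u"
  unfolding qf_join hamQ_def blocks_block_mat
  by (simp add: qf_def matrix_vector_mult_add_rdistrib inner_add_right inner_add_left
      matrix_vector_mul_assoc[symmetric] inner_vmul algebra_simps)

lemma transpose_block_mat: "transpose (block_mat a b c d) = block_mat (transpose a) (transpose c) (transpose b) (transpose d)"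
  by (simp add: block_mat_def transpose_def vec_eq_iff split: sum.splits)

lemma hamQ_sym: "transpose P = P \<Longrightarrow> transpose S = S \<Longrightarrow> transpose R = R \<Longrightarrow> transpose (hamQ A B S R P) = hamQ A B S R P"
  unfolding hamQ_def transpose_block_mat
  by (simp only: transpose_add matrix_transpose_mul matrix_mul_assoc transpose_transpose)




lemma minv:
  assumes "invertible (X::real^'m^'m)"
  shows "X ** matrix_inv X = mat 1" "matrix_inv X ** X = mat 1"
  using someI_ex[OF assms[unfolded invertible_def]] unfolding matrix_inv_def by auto

lemma minv_sym:
  assumes "invertible (X::real^'m^'m)" "transpose X = X"
  shows "transpose (matrix_inv X) = matrix_inv X"
proof -
  have "transpose (matrix_inv X) ** X = mat 1"
    using arg_cong[OF minv(1)[OF assms(1)], of transpose]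
    by (simp add: matrix_transpose_mul assms(2))
  have "transpose (matrix_inv X) = transpose (matrix_inv X) ** (X ** matrix_inv X)"
    by (simp add: minv(1)[OF assms(1)])
  also have "\<dots> = (transpose (matrix_inv X) ** X) ** matrix_inv X"
    by (simp only: matrix_mul_assoc)
  also have "\<dots> = matrix_inv X" using \<open>transpose (matrix_inv X) ** X = mat 1\<close>
    by (simp add: matrix_mul_lid)
  finally show ?thesis .
qed

lemma invertible_of_pos:
  fixes X :: "real^'m^'m"
  assumes "\<And>u. u \<noteq> 0 \<Longrightarrow> 0 < qf X u"
  shows "invertible X"
proof -
  have "\<forall>x. X *v x = 0 \<longrightarrow> x = 0"
  proof (intro allI impI)
    fix x assume "X *v x = 0"
    hence "qf X x = 0" by (simp add: qf_def)
    thus "x = 0" using assms by force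
  qed
  thus ?thesis using invertible_left_inverse matrix_left_invertible_ker by blast
qed

definition uopt :: "real^('n::finite+'m::finite)^('n+'m) \<Rightarrow> real^'n \<Rightarrow> real^'m" where
  "uopt M x = - (matrix_inv (blk_uu M) *v (blk_ux M *v x))"

lemma schur_identity:
  assumes sym: "transpose M = M" and inv: "invertible (blk_uu M)"
  shows "qf M (join x u) = qf (schurH M) x + qf (blk_uu M) (u - uopt M x)"
proof -
  define Mi where "Mi = matrix_inv (blk_uu M)"
  define w where "w = blk_ux M *v x"
  define v where "v = Mi *v w"
  have Mv: "blk_uu M *v v = w"
    unfolding v_def Mi_def by (simp add: matrix_vector_mul_assoc minv(1)[OF inv])
  have us: "u - uopt M x = u + v" unfolding uopt_def v_def w_def Mi_def by simp
  have h: "qf (schurH M) x = qf (blk_xx M) x - w \<bullet> v"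
  proof -
    have "(transpose (blk_ux M) ** Mi ** blk_ux M) *v x = transpose (blk_ux M) *v v"
      unfolding v_def w_def by (simp add: matrix_vector_mul_assoc matrix_mul_assoc)
    hence "x \<bullet> ((transpose (blk_ux M) ** Mi ** blk_ux M) *v x) = w \<bullet> v"
      by (simp only: inner_transpose w_def)
    thus ?thesis unfolding schurH_def qf_diff Mi_def[symmetric] by (simp add: qf_def)
  qed
  have cross: "v \<bullet> (blk_uu M *v u) = w \<bullet> u"
  proof -
    have "v \<bullet> (blk_uu M *v u) = v \<bullet> (transpose (blk_uu M) *v u)"
      by (simp only: blk_uu_sym[OF sym])
    also have "\<dots> = (blk_uu M *v v) \<bullet> u" by (rule inner_transpose)
    finally show ?thesis by (simp only: Mv)
  qed
  have q: "qf (blk_uu M) (u + v) = qf (blk_uu M) u + 2 * (u \<bullet> w) + v \<bullet> w"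
  proof -
    have "qf (blk_uu M) (u + v) = u \<bullet> (blk_uu M *v u) + u \<bullet> (blk_uu M *v v) + v \<bullet> (blk_uu M *v u) + v \<bullet> (blk_uu M *v v)"
      unfolding qf_def by (simp add: matrix_vector_right_distrib inner_add_left inner_add_right)
    also have "\<dots> = qf (blk_uu M) u + u \<bullet> w + w \<bullet> u + v \<bullet> w"
      by (simp only: Mv cross qf_def)
    finally show ?thesis by (simp add: inner_commute)
  qed
  show ?thesis
    unfolding qf_join_sym[OF sym] us q h w_def[symmetric]
    by (simp add: inner_commute)
qed

lemma schur_le:
  assumes "transpose M = M" "invertible (blk_uu M)" "\<And>u. 0 \<le> qf (blk_uu M) u"
  shows "qf (schurH M) x \<le> qf M (join x u)"
  using schur_identity[OF assms(1,2), of x u] assms(3)[of "u - uopt M x"] by linarith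

lemma schur_eq:
  assumes "transpose M = M" "invertible (blk_uu M)"
  shows "qf (schurH M) x = qf M (join x (uopt M x))"
  using schur_identity[OF assms(1,2), of x "uopt M x"] by (simp add: qf_def)

lemma schur_sym:
  assumes sym: "transpose M = M" and inv: "invertible (blk_uu M)"
  shows "transpose (schurH M) = schurH M"
  unfolding schurH_def
  by (simp add: transpose_diff matrix_transpose_mul blk_xx_sym[OF sym]
      minv_sym[OF inv blk_uu_sym[OF sym]] matrix_mul_assoc)

lemma qf_blk_uu: "qf (blk_uu M) u = qf M (join 0 u)"
  using qf_join[of M 0 u] by (simp add: qf_def)

lemma spec_norm_nonneg: "0 \<le> spec_norm (M::real^'c^'r)"
  unfolding spec_norm_def by (rule onorm_pos_le) simp

lemma norm_mv_le: "norm (M *v x) \<le> spec_norm M * norm (x::real^'c)"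
  unfolding spec_norm_def by (rule onorm) simp

lemma qf_abs_le: "\<bar>qf M x\<bar> \<le> spec_norm M * (norm x)\<^sup>2"
proof -
  have "\<bar>qf M x\<bar> \<le> norm x * norm (M *v x)"
    unfolding qf_def by (rule Cauchy_Schwarz_ineq2)
  also have "\<dots> \<le> norm x * (spec_norm M * norm x)"
    by (rule mult_left_mono[OF norm_mv_le]) simp
  finally show ?thesis by (simp add: power2_eq_square mult_ac)
qed

lemma qf_scale: "qf M (c *\<^sub>R x) = c\<^sup>2 * qf M x"
  by (simp only: qf_def matrix_vector_mult_scaleR inner_scaleR_left inner_scaleR_right power2_eq_square mult.assoc)

lemma spec_norm_le_qf:
  fixes E :: "real^'n^'n"
  assumes sym: "transpose E = E" and c: "\<And>x. \<bar>qf E x\<bar> \<le> c * (norm x)\<^sup>2"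
  shows "spec_norm E \<le> c"
  unfolding spec_norm_def
proof (rule onorm_le)
  fix x :: "real^'n"
  show "norm (E *v x) \<le> c * norm x"
  proof (cases "E *v x = 0")
    case True
    have "0 \<le> c * (norm (axis undefined 1 :: real^'n))\<^sup>2" by (rule order_trans[OF abs_ge_zero c])
    hence "0 \<le> c" by (simp add: norm_axis_1)
    thus ?thesis using True by simp
  next
    case False
    define a where "a = norm x / norm (E *v x)"
    define z where "z = a *\<^sub>R (E *v x)"
    have x0: "x \<noteq> 0" using False by auto
    have na: "norm (E *v x) > 0" using False by simp
    have nz: "norm z = norm x" unfolding z_def a_def using na by simp
    have symi: "x \<bullet> (E *v z) = z \<bullet> (E *v x)"
    proof -
      have "x \<bullet> (E *v z) = x \<bullet> (transpose E *v z)" by (simp only: sym)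
      also have "\<dots> = (E *v x) \<bullet> z" by (rule inner_transpose)
      finally show ?thesis by (simp add: inner_commute)
    qed
    have e1: "qf E (x + z) = x \<bullet> (E *v x) + x \<bullet> (E *v z) + z \<bullet> (E *v x) + z \<bullet> (E *v z)"
      unfolding qf_def by (simp add: matrix_vector_right_distrib inner_add_left inner_add_right)
    have e2: "qf E (x - z) = x \<bullet> (E *v x) - x \<bullet> (E *v z) - z \<bullet> (E *v x) + z \<bullet> (E *v z)"
      unfolding qf_def by (simp add: matrix_vector_mult_diff_distrib inner_diff_left inner_diff_right)
    have pol: "qf E (x + z) - qf E (x - z) = 4 * (z \<bullet> (E *v x))"
      using e1 e2 symi by linarith
    have zE: "z \<bullet> (E *v x) = norm x * norm (E *v x)"
      unfolding z_def a_def using na by (simp add: power2_norm_eq_inner[symmetric] power2_eq_square)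
    have par0: "(norm (x + z))\<^sup>2 + (norm (x - z))\<^sup>2 = 2 * (norm x)\<^sup>2 + 2 * (norm z)\<^sup>2"
      by (simp add: power2_norm_eq_inner inner_add_left inner_add_right inner_diff_left inner_diff_right inner_commute[of z x])
    have par: "(norm (x + z))\<^sup>2 + (norm (x - z))\<^sup>2 = 4 * (norm x)\<^sup>2"
      using par0 nz by simp
    have "4 * (norm x * norm (E *v x)) \<le> \<bar>qf E (x + z)\<bar> + \<bar>qf E (x - z)\<bar>"
      using pol zE by linarith
    also have "\<dots> \<le> c * (norm (x + z))\<^sup>2 + c * (norm (x - z))\<^sup>2"
      using c[of "x+z"] c[of "x-z"] by linarith
    also have "\<dots> = c * ((norm (x + z))\<^sup>2 + (norm (x - z))\<^sup>2)" by (simp add: distrib_left)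
    also have "\<dots> = 4 * (c * norm x * norm x)" unfolding par by (simp add: power2_eq_square)
    finally have "norm x * norm (E *v x) \<le> norm x * (c * norm x)" by (simp add: mult_ac)
    thus ?thesis using x0 by simp
  qed
qed

lemma pd_lower:
  fixes M :: "real^'n^'n"
  assumes "\<And>x. x \<noteq> 0 \<Longrightarrow> 0 < qf M x"
  shows "\<exists>c>0. \<forall>x. c * (norm x)\<^sup>2 \<le> qf M x"
proof -
  have cont: "continuous_on (sphere 0 1) (qf M)"
    unfolding qf_def
    by (intro continuous_intros linear_continuous_on) (auto intro: bounded_linear_ident)
  have "sphere (0::real^'n) 1 \<noteq> {}" by (simp add: sphere_eq_empty)
  then obtain x0 where x0: "x0 \<in> sphere 0 1" and mn: "\<And>y. y \<in> sphere 0 1 \<Longrightarrow> qf M x0 \<le> qf M y"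
    using continuous_attains_inf[OF compact_sphere _ cont] by blast
  have "x0 \<noteq> 0" using x0 by auto
  hence pos: "0 < qf M x0" by (rule assms)
  have "qf M x0 * (norm x)\<^sup>2 \<le> qf M x" for x
  proof (cases "x = 0")
    case True thus ?thesis by (simp add: qf_def)
  next
    case False
    define y where "y = (1 / norm x) *\<^sub>R x"
    have "y \<in> sphere 0 1" unfolding y_def using False by simp
    hence "qf M x0 \<le> qf M y" by (rule mn)
    moreover have "qf M x = (norm x)\<^sup>2 * qf M y"
      unfolding y_def qf_scale using False by (simp add: power2_eq_square field_simps)
    ultimately show ?thesis using False by (simp add: mult.commute mult_left_mono)
  qed
  thus ?thesis using pos by blast
qed




primrec traj :: "(nat \<Rightarrow> real^('n::finite+'m::finite)^('n+'m)) \<Rightarrow> real^'n^'n \<Rightarrow> real^'m^'n \<Rightarrow> nat \<Rightarrow> real^'n \<Rightarrow> nat \<Rightarrow> real^'n" where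
  "traj Ms A B i x 0 = x"
| "traj Ms A B i x (Suc k) = A *v traj Ms A B i x k + B *v uopt (Ms (i - Suc k)) (traj Ms A B i x k)"

locale setting =
  fixes A :: "real^'n::finite^'n" and B :: "real^'m::finite^'n" and S :: "real^'n^'n" and R :: "real^'m^'m"
    and Pstar :: "real^'n^'n" and P0 :: "real^'n^'n" and dQ :: "nat \<Rightarrow> real^('n+'m)^('n+'m)"
    and lam0 d :: real
  assumes symS: "transpose S = S" and symR: "transpose R = R"
    and lam0: "lam0 > 0"
    and Slow: "\<And>x. lam0 * (norm x)\<^sup>2 \<le> qf S x" and Rlow: "\<And>u. lam0 * (norm u)\<^sup>2 \<le> qf R u"
    and symPs: "transpose Pstar = Pstar" and Psnn: "\<And>x. 0 \<le> qf Pstar x"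
    and Pfix: "Pstar = schurH (hamQ A B S R Pstar)"
    and d0: "0 \<le> d" and dsmall: "2 * d \<le> lam0"
    and dQb: "\<And>i z. \<bar>qf (dQ i) z\<bar> \<le> d * (norm z)\<^sup>2"
    and symdQ: "\<And>i. transpose (dQ i) = dQ i"
    and symP0: "transpose P0 = P0" and P0nn: "\<And>x. 0 \<le> qf P0 x"
begin

abbreviation "P i \<equiv> riccati_iter A B S R P0 dQ i"
abbreviation "M i \<equiv> hamQ A B S R (P i) + dQ i"
abbreviation "Mst \<equiv> hamQ A B S R Pstar"

lemma qf_M: "qf (M i) (join x u) = qf (P i) (A *v x + B *v u) + qf S x + qf R u + qf (dQ i) (join x u)"
  by (simp add: qf_add qf_hamQ)

lemma stage: "(lam0 / 2) * ((norm x)\<^sup>2 + (norm u)\<^sup>2) \<le> qf S x + qf R u + qf (dQ i) (join x u)"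
proof -
  have "- (d * ((norm x)\<^sup>2 + (norm u)\<^sup>2)) \<le> qf (dQ i) (join x u)"
    using dQb[of i "join x u"] unfolding norm_join_sq by linarith
  moreover have "d * ((norm x)\<^sup>2 + (norm u)\<^sup>2) \<le> (lam0/2) * ((norm x)\<^sup>2 + (norm u)\<^sup>2)"
    using dsmall by (intro mult_right_mono) auto
  ultimately show ?thesis using Slow[of x] Rlow[of u] by (simp add: algebra_simps)
qed

lemma inv_sym: "transpose Q = Q \<Longrightarrow> transpose (hamQ A B S R Q + dQ i) = hamQ A B S R Q + dQ i"
  by (simp add: transpose_add hamQ_sym symS symR symdQ)

lemma inv_lo:
  assumes nn: "\<And>x. 0 \<le> qf Q x"
  shows "(lam0 / 2) * ((norm x)\<^sup>2 + (norm u)\<^sup>2) \<le> qf (hamQ A B S R Q + dQ i) (join x u)"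
  unfolding qf_add qf_hamQ using stage[of x u i] nn[of "A *v x + B *v u"] by linarith

lemma inv_uu:
  assumes nn: "\<And>x. 0 \<le> qf Q x"
  shows "0 \<le> qf (blk_uu (hamQ A B S R Q + dQ i)) u"
proof -
  have "0 \<le> (lam0 / 2) * ((norm (0::real^'n))\<^sup>2 + (norm u)\<^sup>2)" using lam0 by simp
  thus ?thesis unfolding qf_blk_uu using inv_lo[OF nn, of 0 u i] by linarith
qed

lemma inv_inv:
  assumes nn: "\<And>x. 0 \<le> qf Q x"
  shows "invertible (blk_uu (hamQ A B S R Q + dQ i))"
proof (rule invertible_of_pos)
  fix u :: "real^'m" assume "u \<noteq> 0"
  hence "0 < (lam0/2) * ((norm (0::real^'n))\<^sup>2 + (norm u)\<^sup>2)" using lam0 by simp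
  thus "0 < qf (blk_uu (hamQ A B S R Q + dQ i)) u" unfolding qf_blk_uu using inv_lo[OF nn, of 0 u i] by linarith
qed

lemma invP: "transpose (P i) = P i \<and> (\<forall>x. 0 \<le> qf (P i) x)"
proof (induction i)
  case 0 thus ?case using symP0 P0nn by simp
next
  case (Suc i)
  hence s: "transpose (P i) = P i" and nn: "\<And>x. 0 \<le> qf (P i) x" by auto
  have st1: "transpose (M i) = M i" by (rule inv_sym[OF s])
  have st2: "invertible (blk_uu (M i))" by (rule inv_inv[OF nn])
  have "transpose (P (Suc i)) = P (Suc i)" by (simp add: schur_sym[OF st1 st2])
  moreover have "0 \<le> qf (P (Suc i)) x" for x
  proof -
    have "qf (P (Suc i)) x = qf (M i) (join x (uopt (M i) x))" by (simp add: schur_eq[OF st1 st2])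
    also have "\<dots> \<ge> 0"
    proof -
      have "0 \<le> (lam0 / 2) * ((norm x)\<^sup>2 + (norm (uopt (M i) x))\<^sup>2)" using lam0 by simp
      thus ?thesis using inv_lo[OF nn, of x "uopt (M i) x" i] by linarith
    qed
    finally show ?thesis .
  qed
  ultimately show ?case by blast
qed

lemma Pnn: "0 \<le> qf (P i) x" using invP by blast
lemma Psym: "transpose (P i) = P i" using invP by blast

lemma M_props:
  "transpose (M i) = M i" "invertible (blk_uu (M i))" "\<And>u. 0 \<le> qf (blk_uu (M i)) u"
  using inv_sym[OF Psym] inv_inv[OF Pnn] inv_uu[OF Pnn] by auto

lemma P_le: "qf (P (Suc i)) x \<le> qf (M i) (join x u)"
  using schur_le[OF M_props] by simp

lemma P_eq: "qf (P (Suc i)) x = qf (M i) (join x (uopt (M i) x))"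
  using schur_eq[OF M_props(1,2)] by simp

lemma Mst_props:
  "transpose Mst = Mst" "invertible (blk_uu Mst)" "\<And>u. 0 \<le> qf (blk_uu Mst) u"
proof -
  show "transpose Mst = Mst" by (rule hamQ_sym[OF symPs symS symR])
  have lo: "lam0 * (norm u)\<^sup>2 \<le> qf (blk_uu Mst) u" for u
    unfolding qf_blk_uu qf_hamQ using Psnn[of "B *v u"] Rlow[of u] by (simp add: qf_def)
  show "0 \<le> qf (blk_uu Mst) u" for u using lo[of u] lam0 by (smt (verit) zero_le_power2 mult_nonneg_nonneg)
  show "invertible (blk_uu Mst)"
    by (rule invertible_of_pos) (smt (verit) lo lam0 norm_eq_zero zero_less_power2 mult_pos_pos)
qed

lemma Ps_le: "qf Pstar x \<le> qf Pstar (A *v x + B *v u) + qf S x + qf R u"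
  using schur_le[OF Mst_props, of x u] Pfix qf_hamQ by metis

lemma Ps_eq: "qf Pstar x = qf Pstar (A *v x + B *v uopt Mst x) + qf S x + qf R (uopt Mst x)"
  using schur_eq[OF Mst_props(1,2), of x] Pfix qf_hamQ by metis


lemma upper:
  assumes pl: "p \<ge> lam0" and pb: "\<And>x. qf Pstar x \<le> p * (norm x)\<^sup>2"
    and lP: "lamP > 0" and lPb: "\<And>x. lamP * (norm x)\<^sup>2 \<le> qf Pstar x"
    and r0b: "\<And>x. \<bar>qf (P0 - Pstar) x\<bar> \<le> r0 * (norm x)\<^sup>2" and r0: "r0 \<ge> 0"
  shows "qf (P i) x - qf Pstar x \<le> ((r0/lamP) * (1 - lam0/p)^i + (p/lam0\<^sup>2) * d) * qf Pstar x"
proof (induction i arbitrary: x)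
  case 0
  have "qf P0 x - qf Pstar x \<le> r0 * (norm x)\<^sup>2" using r0b[of x] unfolding qf_diff by linarith
  also have "\<dots> = (r0/lamP) * (lamP * (norm x)\<^sup>2)" using lP by simp
  also have "\<dots> \<le> (r0/lamP) * qf Pstar x" by (rule mult_left_mono[OF lPb]) (use r0 lP in simp)
  finally have f: "qf P0 x - qf Pstar x \<le> (r0/lamP) * qf Pstar x" .
  have "0 \<le> (p/lam0\<^sup>2) * d * qf Pstar x" using lam0 d0 Psnn[of x] pl by simp
  thus ?case using f by (simp add: distrib_right)
next
  case (Suc i)
  define u where "u = uopt Mst x"
  define y where "y = A *v x + B *v u"
  define \<rho> where "\<rho> = 1 - lam0/p"
  define a where "a = (r0/lamP) * \<rho>^i + (p/lam0\<^sup>2) * d"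
  have p0: "p > 0" using pl lam0 by simp
  have rho0: "0 \<le> \<rho>" unfolding \<rho>_def using pl p0 by simp
  have a0: "0 \<le> a" unfolding a_def using rho0 r0 lP d0 p0 by simp
  have h1: "qf (P (Suc i)) x \<le> qf (P i) y + qf S x + qf R u + qf (dQ i) (join x u)"
    using P_le[of i x u] unfolding qf_M y_def .
  have h2: "qf (dQ i) (join x u) \<le> d * ((norm x)\<^sup>2 + (norm u)\<^sup>2)"
    using dQb[of i "join x u"] unfolding norm_join_sq by linarith
  have h3: "qf Pstar x = qf Pstar y + qf S x + qf R u" using Ps_eq[of x] unfolding y_def u_def .
  have h4: "lam0 * ((norm x)\<^sup>2 + (norm u)\<^sup>2) \<le> qf Pstar x"
    using h3 Slow[of x] Rlow[of u] Psnn[of y] by (simp add: distrib_left)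
  have h5: "qf Pstar y \<le> \<rho> * qf Pstar x"
  proof -
    have "(lam0/p) * qf Pstar x \<le> (lam0/p) * (p * (norm x)\<^sup>2)"
      by (rule mult_left_mono[OF pb]) (use lam0 p0 in simp)
    also have "\<dots> = lam0 * (norm x)\<^sup>2" using p0 by simp
    finally have "(lam0/p) * qf Pstar x \<le> lam0 * (norm x)\<^sup>2" .
    moreover have "0 \<le> lam0 * (norm u)\<^sup>2" using lam0 by simp
    hence "qf Pstar y \<le> qf Pstar x - lam0 * (norm x)\<^sup>2" using h3 Slow[of x] Rlow[of u] by linarith
    moreover have "\<rho> * qf Pstar x = qf Pstar x - (lam0/p) * qf Pstar x" by (simp add: \<rho>_def left_diff_distrib)
    ultimately show ?thesis by linarith
  qed
  have IH: "qf (P i) y - qf Pstar y \<le> a * qf Pstar y" using Suc.IH[of y] unfolding a_def \<rho>_def .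
  have "qf (P (Suc i)) x - qf Pstar x \<le> (qf (P i) y - qf Pstar y) + d * ((norm x)\<^sup>2 + (norm u)\<^sup>2)"
    using h1 h2 h3 by linarith
  also have "\<dots> \<le> a * (\<rho> * qf Pstar x) + (d / lam0) * qf Pstar x"
  proof -
    have "a * qf Pstar y \<le> a * (\<rho> * qf Pstar x)" by (rule mult_left_mono[OF h5 a0])
    moreover have "d * ((norm x)\<^sup>2 + (norm u)\<^sup>2) \<le> (d / lam0) * qf Pstar x"
    proof -
      have "(d / lam0) * (lam0 * ((norm x)\<^sup>2 + (norm u)\<^sup>2)) \<le> (d / lam0) * qf Pstar x"
        by (rule mult_left_mono[OF h4]) (use d0 lam0 in simp)
      thus ?thesis using lam0 by simp
    qed
    ultimately show ?thesis using IH by linarith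
  qed
  also have "\<dots> = ((r0/lamP) * \<rho>^Suc i + (p/lam0\<^sup>2) * d) * qf Pstar x"
  proof -
    have k: "(p/lam0\<^sup>2) * d * \<rho> + d / lam0 = (p/lam0\<^sup>2) * d"
      unfolding \<rho>_def using p0 lam0 by (simp add: field_simps power2_eq_square)
    have "a * \<rho> + d / lam0 = (r0/lamP) * (\<rho>^i * \<rho>) + ((p/lam0\<^sup>2) * d * \<rho> + d / lam0)"
      unfolding a_def by (simp add: algebra_simps)
    hence "a * \<rho> + d / lam0 = (r0/lamP) * \<rho>^Suc i + (p/lam0\<^sup>2) * d"
      unfolding k by (simp add: power_Suc2)
    moreover have "a * (\<rho> * qf Pstar x) + (d / lam0) * qf Pstar x = (a * \<rho> + d / lam0) * qf Pstar x"
      by (simp only: distrib_right mult.assoc)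
    ultimately show ?thesis by simp
  qed
  finally show ?case unfolding \<rho>_def .
qed

definition "ytr i x = traj (\<lambda>j. M j) A B i x"
definition "utr i x k = uopt (M (i - Suc k)) (ytr i x k)"
definition "wtr i x k = (norm (ytr i x k))\<^sup>2 + (norm (utr i x k))\<^sup>2"

lemma ytr_Suc: "ytr i x (Suc k) = A *v ytr i x k + B *v utr i x k"
  unfolding ytr_def utr_def by simp

lemma ytr_0: "ytr i x 0 = x" unfolding ytr_def by simp

lemma traj_step:
  assumes "k < i"
  shows "qf (P (i - k)) (ytr i x k) = qf (P (i - Suc k)) (ytr i x (Suc k))
           + (qf S (ytr i x k) + qf R (utr i x k) + qf (dQ (i - Suc k)) (join (ytr i x k) (utr i x k)))"
proof -
  have e: "i - k = Suc (i - Suc k)" using assms by simp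
  show ?thesis unfolding e P_eq qf_M ytr_Suc utr_def by simp
qed

lemma traj_T1:
  assumes "j \<le> i"
  shows "qf (P (i - j)) (ytr i x j) + (lam0/2) * (\<Sum>k<j. wtr i x k) \<le> qf (P i) x"
  using assms
proof (induction j)
  case 0 thus ?case by (simp add: ytr_0)
next
  case (Suc j)
  hence "j < i" by simp
  note st = traj_step[OF this, of x]
  have "(lam0/2) * wtr i x j \<le> qf S (ytr i x j) + qf R (utr i x j) + qf (dQ (i - Suc j)) (join (ytr i x j) (utr i x j))"
    unfolding wtr_def by (rule stage)
  thus ?case using Suc.IH Suc.prems st by (simp add: distrib_left)
qed

lemma traj_T2:
  assumes "j \<le> i"
  shows "qf Pstar x - qf (P i) x \<le> (qf Pstar (ytr i x j) - qf (P (i - j)) (ytr i x j)) + d * (\<Sum>k<j. wtr i x k)"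
  using assms
proof (induction j)
  case 0 thus ?case by (simp add: ytr_0)
next
  case (Suc j)
  hence "j < i" by simp
  note st = traj_step[OF this, of x]
  have b: "qf Pstar (ytr i x j) \<le> qf Pstar (ytr i x (Suc j)) + qf S (ytr i x j) + qf R (utr i x j)"
    unfolding ytr_Suc by (rule Ps_le)
  have c: "- qf (dQ (i - Suc j)) (join (ytr i x j) (utr i x j)) \<le> d * wtr i x j"
    using dQb[of "i - Suc j" "join (ytr i x j) (utr i x j)"] unfolding norm_join_sq wtr_def by linarith
  show ?case using Suc.IH Suc.prems st b c by (simp add: distrib_left)
qed

lemma wtr_nn: "0 \<le> wtr i x k" unfolding wtr_def by simp

lemma W_bound:
  assumes U: "\<And>x. qf (P i) x \<le> U * (norm x)\<^sup>2"
  shows "(\<Sum>k<i. wtr i x k) \<le> (2 * U / lam0) * (norm x)\<^sup>2"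
proof -
  have "(lam0/2) * (\<Sum>k<i. wtr i x k) \<le> qf (P i) x"
    using traj_T1[of i i x] Pnn[of 0 "ytr i x i"] by simp
  hence "(lam0/2) * (\<Sum>k<i. wtr i x k) \<le> U * (norm x)\<^sup>2" using U[of x] by linarith
  thus ?thesis using lam0 by (simp add: field_simps)
qed

lemma lower1:
  assumes U: "\<And>x. qf (P i) x \<le> U * (norm x)\<^sup>2"
    and r0b: "\<And>x. \<bar>qf (P0 - Pstar) x\<bar> \<le> r0 * (norm x)\<^sup>2"
  shows "qf Pstar x - qf (P i) x \<le> r0 * (norm (ytr i x i))\<^sup>2 + d * ((2 * U / lam0) * (norm x)\<^sup>2)"
proof -
  have "qf Pstar x - qf (P i) x \<le> (qf Pstar (ytr i x i) - qf P0 (ytr i x i)) + d * (\<Sum>k<i. wtr i x k)"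
    using traj_T2[of i i x] by simp
  moreover have "qf Pstar (ytr i x i) - qf P0 (ytr i x i) \<le> r0 * (norm (ytr i x i))\<^sup>2"
    using r0b[of "ytr i x i"] unfolding qf_diff by linarith
  moreover have "d * (\<Sum>k<i. wtr i x k) \<le> d * ((2 * U / lam0) * (norm x)\<^sup>2)"
    by (rule mult_left_mono[OF W_bound[OF U] d0])
  ultimately show ?thesis by linarith
qed

lemma lower2:
  assumes U: "\<And>x. qf (P i) x \<le> U * (norm x)\<^sup>2" and i: "0 < i"
    and pb: "\<And>x. qf Pstar x \<le> p * (norm x)\<^sup>2" and p0: "0 \<le> p"
  shows "qf Pstar x - qf (P i) x \<le> (p / i + d) * ((2 * U / lam0) * (norm x)\<^sup>2)"
proof -
  define W where "W = (\<Sum>k<i. wtr i x k)"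
  define g where "g = qf Pstar x - qf (P i) x"
  have W0: "0 \<le> W" unfolding W_def by (intro sum_nonneg wtr_nn)
  have each: "g \<le> p * wtr i x j + d * W" if "j < i" for j
  proof -
    have "g \<le> (qf Pstar (ytr i x j) - qf (P (i - j)) (ytr i x j)) + d * (\<Sum>k<j. wtr i x k)"
      unfolding g_def using traj_T2[of j i x] that by simp
    moreover have "qf Pstar (ytr i x j) - qf (P (i - j)) (ytr i x j) \<le> p * wtr i x j"
    proof -
      have "qf Pstar (ytr i x j) \<le> p * (norm (ytr i x j))\<^sup>2" by (rule pb)
      also have "\<dots> \<le> p * wtr i x j" unfolding wtr_def by (rule mult_left_mono[OF _ p0]) simp
      finally show ?thesis using Pnn[of "i - j" "ytr i x j"] by linarith
    qed
    moreover have "(\<Sum>k<j. wtr i x k) \<le> W"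
      unfolding W_def by (rule sum_mono2) (use that wtr_nn in auto)
    hence "d * (\<Sum>k<j. wtr i x k) \<le> d * W" by (rule mult_left_mono[OF _ d0])
    ultimately show ?thesis by linarith
  qed
  have "(\<Sum>j<i. g) \<le> (\<Sum>j<i. p * wtr i x j + d * W)" by (rule sum_mono) (use each in simp)
  hence "real i * g \<le> p * W + real i * (d * W)"
    by (simp add: sum.distrib sum_distrib_left[symmetric] W_def)
  hence "g \<le> (p / i + d) * W" using i by (simp add: field_simps)
  also have "\<dots> \<le> (p / i + d) * ((2 * U / lam0) * (norm x)\<^sup>2)"
    by (rule mult_left_mono[OF W_bound[OF U, of x, folded W_def]]) (use p0 d0 in simp)
  finally show ?thesis unfolding g_def .
qed

end




lemma classK_lin: "c > 0 \<Longrightarrow> class_K (\<lambda>r. c * r)"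
  unfolding class_K_def strict_mono_on_def by (auto intro!: continuous_intros)

lemma classKL_h:
  assumes C: "C > 0" and q: "0 < q" "q < 1" and D: "D \<ge> 0"
  shows "class_KL (\<lambda>r i. r * (C * q^i + D * inverse (real (Suc i))))"
proof -
  have hpos: "0 < C * q^i + D * inverse (real (Suc i))" for i
    using C q D by (simp add: add_pos_nonneg)
  have anti: "antimono (\<lambda>i. C * q^i + D * inverse (real (Suc i)))"
  proof (rule antimonoI)
    fix i j :: nat assume "i \<le> j"
    have "q^j \<le> q^i" using q \<open>i \<le> j\<close> by (simp add: power_decreasing)
    moreover have "inverse (real (Suc j)) \<le> inverse (real (Suc i))" using \<open>i \<le> j\<close> by (simp add: le_imp_inverse_le)
    ultimately show "C * q^j + D * inverse (real (Suc j)) \<le> C * q^i + D * inverse (real (Suc i))"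
      using C D by (simp add: add_mono mult_left_mono)
  qed
  have lim: "(\<lambda>i. C * q^i + D * inverse (real (Suc i))) \<longlonglongrightarrow> 0"
  proof -
    have "(\<lambda>i. q^i) \<longlonglongrightarrow> 0" using q by (intro LIMSEQ_power_zero) simp
    moreover have "(\<lambda>i. inverse (real (Suc i))) \<longlonglongrightarrow> 0" by (rule LIMSEQ_inverse_real_of_nat)
    ultimately show ?thesis by (auto intro!: tendsto_add_zero tendsto_mult_right_zero)
  qed
  show ?thesis
    unfolding class_KL_def
  proof (intro conjI allI impI)
    fix i show "class_K (\<lambda>r. r * (C * q^i + D * inverse (real (Suc i))))"
      using classK_lin[OF hpos[of i]] by (simp add: mult.commute)
  next
    fix r :: real assume r: "0 \<le> r"
    show "antimono (\<lambda>i. r * (C * q^i + D * inverse (real (Suc i))))"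
      using anti r by (auto simp: antimono_def intro: mult_left_mono)
    show "(\<lambda>i. r * (C * q^i + D * inverse (real (Suc i)))) \<longlonglongrightarrow> 0"
      using tendsto_mult_right_zero[OF lim, of r] by simp
  qed
qed

theorem proposition4:
  fixes A :: "real^'n^'n" and B :: "real^'m^'n" and S :: "real^'n^'n" and R :: "real^'m^'m"
    and Pstar :: "real^'n^'n" and P0 :: "real^'n^'n"
  assumes "pd_mat S" and "pd_mat R" and "stabilizable A B"
    and "pd_mat Pstar" and "Pstar = schurH (hamQ A B S R Pstar)"
    and "psd_mat P0"
  shows "\<exists>dstar>0. \<exists>\<beta> \<gamma>. class_KL \<beta> \<and> class_K \<gamma> \<and>
    (\<forall>dQ :: nat \<Rightarrow> real^('n+'m)^('n+'m).
        (\<forall>i. sym_mat (dQ i)) \<and> bdd_above (range (\<lambda>i. spec_norm (dQ i)))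
        \<and> (SUP i. spec_norm (dQ i)) < dstar \<longrightarrow>
      (\<forall>i. invertible (blk_uu (hamQ A B S R (riccati_iter A B S R P0 dQ i) + dQ i))) \<and>
      (\<forall>i. spec_norm (riccati_iter A B S R P0 dQ i - Pstar)
             \<le> \<beta> (spec_norm (P0 - Pstar)) i + \<gamma> (SUP i. spec_norm (dQ i))))"
proof -
  have symS: "transpose S = S" and pdS: "\<And>x. x \<noteq> 0 \<Longrightarrow> 0 < qf S x"
    using assms(1) unfolding pd_mat_def sym_mat_def qf_def by auto
  have symR: "transpose R = R" and pdR: "\<And>x. x \<noteq> 0 \<Longrightarrow> 0 < qf R x"
    using assms(2) unfolding pd_mat_def sym_mat_def qf_def by auto
  have symPs: "transpose Pstar = Pstar" and pdPs: "\<And>x. x \<noteq> 0 \<Longrightarrow> 0 < qf Pstar x"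
    using assms(4) unfolding pd_mat_def sym_mat_def qf_def by auto
  have symP0: "transpose P0 = P0" and P0nn: "\<And>x. 0 \<le> qf P0 x"
    using assms(6) unfolding psd_mat_def sym_mat_def qf_def by auto
  have Psnn: "0 \<le> qf Pstar x" for x using pdPs[of x] by (cases "x = 0") (auto simp: qf_def)
  obtain sS where sS: "sS > 0" "\<And>x. sS * (norm x)\<^sup>2 \<le> qf S x" using pd_lower[OF pdS] by blast
  obtain sR where sR: "sR > 0" "\<And>x. sR * (norm x)\<^sup>2 \<le> qf R x" using pd_lower[OF pdR] by blast
  obtain lamP where lP: "lamP > 0" "\<And>x. lamP * (norm x)\<^sup>2 \<le> qf Pstar x" using pd_lower[OF pdPs] by blast
  define lam0 where "lam0 = min sS sR"
  have lam0: "lam0 > 0" unfolding lam0_def using sS sR by simp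
  have Slow: "lam0 * (norm x)\<^sup>2 \<le> qf S x" for x
    using sS(2)[of x] unfolding lam0_def by (smt (verit) min.cobounded1 mult_right_mono zero_le_power2)
  have Rlow: "lam0 * (norm x)\<^sup>2 \<le> qf R x" for x
    using sR(2)[of x] unfolding lam0_def by (smt (verit) min.cobounded2 mult_right_mono zero_le_power2)
  define p where "p = max lam0 (spec_norm Pstar)"
  have pl: "p \<ge> lam0" unfolding p_def by simp
  have p0: "p > 0" using pl lam0 by simp
  have pb: "qf Pstar x \<le> p * (norm x)\<^sup>2" for x
  proof -
    have "qf Pstar x \<le> spec_norm Pstar * (norm x)\<^sup>2" using qf_abs_le[of Pstar x] by linarith
    also have "\<dots> \<le> p * (norm x)\<^sup>2" unfolding p_def by (intro mult_right_mono) auto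
    finally show ?thesis .
  qed
  define r0 where "r0 = spec_norm (P0 - Pstar)"
  have r0: "r0 \<ge> 0" unfolding r0_def by (rule spec_norm_nonneg)
  have r0b: "\<bar>qf (P0 - Pstar) x\<bar> \<le> r0 * (norm x)\<^sup>2" for x unfolding r0_def by (rule qf_abs_le)
  define \<rho> where "\<rho> = 1 - lam0 / p"
  have rho: "0 \<le> \<rho>" "\<rho> < 1" unfolding \<rho>_def using pl p0 lam0 by auto
  define q where "q = max \<rho> (1/2)"
  have q: "0 < q" "q < 1" "\<rho> \<le> q" unfolding q_def using rho by auto
  define U where "U = (1 + r0 / lamP + p / lam0) * p"
  define c1 where "c1 = p / lam0\<^sup>2"
  define D where "D = (if r0 = 0 then 0 else max 1 (4 * p * U / (lam0 * r0)))"
  have D0: "D \<ge> 0" unfolding D_def by (auto simp: le_max_iff_disj)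
  define gc where "gc = c1 * p + 2 * U / lam0"
  have U0: "U > 0" unfolding U_def using r0 lP p0 lam0 by (simp add: add_pos_nonneg)
  have gc0: "gc > 0" unfolding gc_def c1_def using p0 lam0 U0 by (simp add: add_nonneg_pos)
  define \<beta> where "\<beta> = (\<lambda>r i. r * ((p / lamP) * q^i + D * inverse (real (Suc i))))"
  define \<gamma> where "\<gamma> = (\<lambda>r::real. gc * r)"
  have KL: "class_KL \<beta>" unfolding \<beta>_def by (rule classKL_h) (use p0 lP q D0 in auto)
  have K: "class_K \<gamma>" unfolding \<gamma>_def by (rule classK_lin[OF gc0])
  show ?thesis
  proof (intro exI[of _ "lam0/2"] conjI exI[of _ \<beta>] exI[of _ \<gamma>] KL K allI impI)
    show "0 < lam0 / 2" using lam0 by simp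
  next
    fix dQ :: "nat \<Rightarrow> real^('n+'m)^('n+'m)"
    assume h: "(\<forall>i. sym_mat (dQ i)) \<and> bdd_above (range (\<lambda>i. spec_norm (dQ i))) \<and> (SUP i. spec_norm (dQ i)) < lam0 / 2"
    define d where "d = (SUP i. spec_norm (dQ i))"
    have dle: "spec_norm (dQ i) \<le> d" for i unfolding d_def using h by (intro cSUP_upper) auto
    have d0: "0 \<le> d" using dle[of 0] spec_norm_nonneg[of "dQ 0"] by linarith
    have dsmall: "2 * d \<le> lam0" using h unfolding d_def by simp
    have dQb: "\<bar>qf (dQ i) z\<bar> \<le> d * (norm z)\<^sup>2" for i z
      using qf_abs_le[of "dQ i" z] dle[of i] by (smt (verit) mult_right_mono zero_le_power2)
    have symdQ: "transpose (dQ i) = dQ i" for i using h unfolding sym_mat_def by auto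
    interpret s: setting A B S R Pstar P0 dQ lam0 d
      by unfold_locales (use symS symR lam0 Slow Rlow symPs Psnn assms(5) d0 dsmall dQb symdQ symP0 P0nn in auto)
    show "invertible (blk_uu (hamQ A B S R (riccati_iter A B S R P0 dQ i) + dQ i))" for i
      using s.M_props(2) by blast
    show "spec_norm (riccati_iter A B S R P0 dQ i - Pstar)
             \<le> \<beta> (spec_norm (P0 - Pstar)) i + \<gamma> (SUP i. spec_norm (dQ i))" for i
    proof -
      let ?P = "riccati_iter A B S R P0 dQ i"
      define a where "a = (r0/lamP) * \<rho>^i + c1 * d"
      have a0: "0 \<le> a" unfolding a_def c1_def using r0 lP rho d0 p0 by (intro add_nonneg_nonneg mult_nonneg_nonneg divide_nonneg_nonneg) auto
      have up: "qf ?P x - qf Pstar x \<le> a * qf Pstar x" for x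
        using s.upper[OF pl pb lP r0b r0, of i x] unfolding a_def c1_def \<rho>_def .
      have ale: "a \<le> r0 / lamP + p / lam0"
      proof -
        have "\<rho>^i \<le> 1" using rho by (simp add: power_le_one)
        hence "(r0/lamP) * \<rho>^i \<le> (r0/lamP) * 1" using r0 lP(1) by (intro mult_left_mono) auto
        moreover have "c1 * d \<le> p / lam0"
        proof -
          have "c1 * d = (p / lam0\<^sup>2) * d" unfolding c1_def ..
          also have "\<dots> \<le> (p / lam0\<^sup>2) * lam0" using dsmall d0 p0 lam0 by (intro mult_left_mono) auto
          also have "\<dots> = p / lam0" using lam0 by (simp add: power2_eq_square)
          finally show ?thesis .
        qed
        ultimately show ?thesis unfolding a_def by linarith
      qed
      have Ub: "qf ?P x \<le> U * (norm x)\<^sup>2" for x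
      proof -
        have "qf ?P x \<le> (1 + a) * qf Pstar x" using up[of x] by (simp add: distrib_right)
        also have "\<dots> \<le> (1 + a) * (p * (norm x)\<^sup>2)" by (rule mult_left_mono[OF pb]) (use a0 in simp)
        also have "\<dots> \<le> (1 + r0 / lamP + p / lam0) * (p * (norm x)\<^sup>2)"
          by (rule mult_right_mono) (use ale p0 in auto)
        finally show ?thesis unfolding U_def by (simp add: mult.assoc)
      qed
      define co where "co = r0 * ((p / lamP) * q^i + D * inverse (real (Suc i))) + gc * d"
      have upper_c: "qf (?P - Pstar) x \<le> co * (norm x)\<^sup>2" for x
      proof -
        have "qf (?P - Pstar) x \<le> a * (p * (norm x)\<^sup>2)"
          unfolding qf_diff using up[of x] mult_left_mono[OF pb[of x] a0] by linarith
        also have "\<dots> \<le> co * (norm x)\<^sup>2"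
        proof -
          have "a * p \<le> co"
          proof -
            have "\<rho>^i \<le> q^i" using rho q by (intro power_mono) auto
            hence "r0 * (p / lamP) * \<rho>^i \<le> r0 * (p / lamP) * q^i" using r0 p0 lP by (intro mult_left_mono) auto
            moreover have "0 \<le> r0 * (D * inverse (real (Suc i)))" using r0 D0 by simp
            moreover have "0 \<le> (2 * U / lam0) * d" using U0 lam0 d0 by simp
            ultimately show ?thesis unfolding a_def co_def gc_def
              by (simp add: algebra_simps)
          qed
          thus ?thesis by (simp add: mult.assoc[symmetric] mult_right_mono)
        qed
        finally show ?thesis .
      qed
      have lower_c: "- qf (?P - Pstar) x \<le> co * (norm x)\<^sup>2" for x
      proof -
        have lowc: "qf Pstar x - qf ?P x \<le> (r0 * (D * inverse (real (Suc i))) + (2 * U / lam0) * d) * (norm x)\<^sup>2"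
        proof (cases "r0 = 0")
          case True
          thus ?thesis using s.lower1[OF Ub r0b, of x] by (simp add: D_def algebra_simps)
        next
          case False
          hence r0p: "r0 > 0" using r0 by simp
          have D1: "D \<ge> 1" "D \<ge> 4 * p * U / (lam0 * r0)" unfolding D_def using False by auto
          show ?thesis
          proof (cases "i = 0")
            case True
            have "qf Pstar x - qf ?P x \<le> r0 * (norm x)\<^sup>2 + d * ((2 * U / lam0) * (norm x)\<^sup>2)"
              using s.lower1[OF Ub r0b, of x] True by (simp add: s.ytr_0)
            moreover have "r0 * (norm x)\<^sup>2 \<le> r0 * D * (norm x)\<^sup>2"
            proof -
              have "r0 \<le> r0 * D" using mult_left_mono[OF D1(1) r0] by simp
              thus ?thesis by (rule mult_right_mono) simp
            qed
            ultimately show ?thesis using True by (simp add: algebra_simps)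
          next
            case False
            hence ip: "0 < i" by simp
            have "qf Pstar x - qf ?P x \<le> (p / i + d) * ((2 * U / lam0) * (norm x)\<^sup>2)"
              by (rule s.lower2[OF Ub ip pb]) (use p0 in simp)
            moreover have "(p / i) * (2 * U / lam0) \<le> r0 * (D * inverse (real (Suc i)))"
            proof -
              have "(p / i) * (2 * U / lam0) = (2 * p * U / lam0) / i" by (simp add: field_simps)
              also have "\<dots> = (2 * p * U / lam0) * (1 / real i)" by simp
              also have "\<dots> \<le> (2 * p * U / lam0) * (2 / real (Suc i))"
              proof (rule mult_left_mono)
                show "1 / real i \<le> 2 / real (Suc i)" using ip by (simp add: field_simps)
              qed (use p0 U0 lam0 in simp)
              also have "\<dots> = (4 * p * U / lam0) / real (Suc i)" by simp
              also have "\<dots> = r0 * (4 * p * U / (lam0 * r0)) * inverse (real (Suc i))"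
                using r0p by (simp add: field_simps)
              also have "\<dots> \<le> r0 * D * inverse (real (Suc i))"
                using D1 r0 by (intro mult_right_mono mult_left_mono) auto
              finally show ?thesis by (simp add: mult.assoc)
            qed
            ultimately show ?thesis
              by (smt (verit) distrib_right mult.assoc mult.commute mult_right_mono zero_le_power2)
          qed
        qed
        have "r0 * (D * inverse (real (Suc i))) + (2 * U / lam0) * d \<le> co"
        proof -
          have "0 \<le> r0 * ((p / lamP) * q^i)" using r0 p0 lP q by simp
          moreover have "0 \<le> c1 * p * d" unfolding c1_def using p0 lam0 d0 by simp
          ultimately show ?thesis unfolding co_def gc_def by (simp add: algebra_simps)
        qed
        hence "(r0 * (D * inverse (real (Suc i))) + (2 * U / lam0) * d) * (norm x)\<^sup>2 \<le> co * (norm x)\<^sup>2"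
          by (rule mult_right_mono) simp
        thus ?thesis using lowc unfolding qf_diff by linarith
      qed
      have symE: "transpose (?P - Pstar) = ?P - Pstar" by (simp add: transpose_diff s.Psym symPs)
      have "spec_norm (?P - Pstar) \<le> co"
        by (rule spec_norm_le_qf[OF symE]) (use upper_c lower_c in \<open>simp add: abs_le_iff\<close>)
      thus "spec_norm (?P - Pstar) \<le> \<beta> (spec_norm (P0 - Pstar)) i + \<gamma> (SUP i. spec_norm (dQ i))"
        unfolding co_def \<beta>_def \<gamma>_def r0_def[symmetric] d_def[symmetric] .
    qed
  qed
qed


end
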